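(* Let $\mathbf{F}$ be a finite field with $q$ elements, let $n=r_1+\dots+r_s$ with $r_1,\dots,r_s>0$, and let $A=\operatorname{diag}(J_{r_1}(0),\dots,J_{r_s}(0))\in M_n(\mathbf{F})$. Consider the $q^n$ matrices obtained from $A$ by replacing its last column by an arbitrary column vector in $\mathbf{F}^n$. Then: (a) the number of nilpotent matrices among them equals the number of non-nilpotent semi-idempotent matrices among them, and both numbers equal $q^{n-r_s}$; (b) if $r_s>1$, then the number of nilpotent matrices among them of rank equal to $\operatorname{rank} A$ equals the number of non-nilpotent semi-idempotent matrices among them of rank equal to $\operatorname{rank} A$, and both numbers equal $q^{n-r_s-(s-1)}$.
   Context: $J_\ell(0)$ is the lower $\ell\times\ell$ Jordan block with eigenvalue $0$: entries $1$ directly below the diagonal and $0$ elsewhere. A square matrix $B$ is semi-idempotent if $\mathbf{F}^n=X\oplus Y$ with $X,Y$ $B$-stable, $B|_X$ the identity and $B|_Y$ nilpotent. *)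

theory Defs
  imports "Jordan_Normal_Form.Jordan_Normal_Form" "Jordan_Normal_Form.DL_Rank"
begin

definition lower_jordan_zero :: "nat \<Rightarrow> 'a::field mat" where
  "lower_jordan_zero l = mat l l (\<lambda>(i,j). if i = Suc j then 1 else 0)"

definition jordan_nilp_diag :: "nat list \<Rightarrow> 'a::field mat" where
  "jordan_nilp_diag rs = diag_block_mat (map lower_jordan_zero rs)"

definition replace_last_col :: "'a mat \<Rightarrow> 'a vec \<Rightarrow> 'a mat" where
  "replace_last_col A v =
     mat (dim_row A) (dim_col A) (\<lambda>(i,j). if j = dim_col A - 1 then v $ i else A $$ (i,j))"

definition nilpotent_mat :: "'a::field mat \<Rightarrow> bool" where
  "nilpotent_mat B \<longleftrightarrow> (\<exists>k. B ^\<^sub>m k = 0\<^sub>m (dim_row B) (dim_col B))"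

definition is_subspace_vec :: "nat \<Rightarrow> 'a::field vec set \<Rightarrow> bool" where
  "is_subspace_vec n X \<longleftrightarrow> X \<subseteq> carrier_vec n \<and> 0\<^sub>v n \<in> X \<and>
     (\<forall>x\<in>X. \<forall>y\<in>X. x + y \<in> X) \<and> (\<forall>c. \<forall>x\<in>X. c \<cdot>\<^sub>v x \<in> X)"

definition semi_idempotent :: "nat \<Rightarrow> 'a::field mat \<Rightarrow> bool" where
  "semi_idempotent n B \<longleftrightarrow> B \<in> carrier_mat n n \<and>
     (\<exists>X Y. is_subspace_vec n X \<and> is_subspace_vec n Y \<and>
        X \<inter> Y = {0\<^sub>v n} \<and> (\<forall>v\<in>carrier_vec n. \<exists>x\<in>X. \<exists>y\<in>Y. v = x + y) \<and>
        (\<forall>x\<in>X. B *\<^sub>v x \<in> X) \<and> (\<forall>y\<in>Y. B *\<^sub>v y \<in> Y) \<and>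
        (\<forall>x\<in>X. B *\<^sub>v x = x) \<and>
        (\<exists>k. \<forall>y\<in>Y. (B ^\<^sub>m k) *\<^sub>v y = 0\<^sub>v n))"

end

theory Submission
  imports Defs
begin

fun starts :: "nat list \<Rightarrow> nat set" where
  "starts [] = {}"
| "starts (r # rs) = insert 0 ((+) r ` starts rs)"

lemma starts_bound: "\<forall>r\<in>set rs. r > 0 \<Longrightarrow> x \<in> starts rs \<Longrightarrow> x < sum_list rs"
  by (induction rs arbitrary: x) auto

lemma starts_le_last: "rs \<noteq> [] \<Longrightarrow> x \<in> starts rs \<Longrightarrow> x \<le> sum_list rs - last rs"
proof (induction rs arbitrary: x)
  case Nil then show ?case by simp
next
  case (Cons r rs)
  show ?case
  proof (cases "rs = []")
    case True then show ?thesis using Cons by simp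
  next
    case False
    have "last rs \<le> sum_list rs" using False
      by (intro member_le_sum_list last_in_set) auto
    from Cons.prems(2) have "x = 0 \<or> (\<exists>y\<in>starts rs. x = r + y)" by auto
    moreover have "r + y \<le> sum_list (r#rs) - last (r#rs)" if "y \<in> starts rs" for y
      using Cons.IH[OF False that] \<open>last rs \<le> sum_list rs\<close> False by simp
    ultimately show ?thesis by auto
  qed
qed

lemma last_in_starts: "rs \<noteq> [] \<Longrightarrow> sum_list rs - last rs \<in> starts rs"
proof (induction rs)
  case Nil then show ?case by simp
next
  case (Cons r rs)
  show ?case
  proof (cases "rs = []")
    case True then show ?thesis by simp
  next
    case False
    have "last rs \<le> sum_list rs" using False
      by (intro member_le_sum_list last_in_set) auto
    then have "sum_list (r#rs) - last (r#rs) = r + (sum_list rs - last rs)" using False by simp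
    then show ?thesis using Cons False by simp
  qed
qed

lemma zero_in_starts: "rs \<noteq> [] \<Longrightarrow> 0 \<in> starts rs"
  by (cases rs) auto

lemma card_starts: "\<forall>r\<in>set rs. r > 0 \<Longrightarrow> card (starts rs) = length rs"
proof (induction rs)
  case Nil then show ?case by simp
next
  case (Cons r rs)
  have "0 \<notin> (+) r ` starts rs" using Cons by auto
  moreover have "card ((+) r ` starts rs) = card (starts rs)" by (simp add: card_image)
  moreover have "finite (starts rs)" by (induction rs) auto
  ultimately show ?case using Cons by simp
qed

lemma lower_jordan_zero_carrier: "lower_jordan_zero l \<in> carrier_mat l l"
  unfolding lower_jordan_zero_def by simp

lemma jnd_carrier: "jordan_nilp_diag rs \<in> carrier_mat (sum_list rs) (sum_list rs)"
  unfolding jordan_nilp_diag_def carrier_mat_def dim_diag_block_mat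
  by (induction rs) (auto simp: lower_jordan_zero_def)

lemma jnd_entry: "\<forall>r\<in>set rs. r > 0 \<Longrightarrow> i < sum_list rs \<Longrightarrow> j < sum_list rs \<Longrightarrow>
  (jordan_nilp_diag rs :: 'a::field mat) $$ (i,j) = (if i = Suc j \<and> i \<notin> starts rs then 1 else 0)"
proof (induction rs arbitrary: i j)
  case Nil then show ?case by simp
next
  case (Cons r rs)
  let ?D = "jordan_nilp_diag rs :: 'a mat"
  have D: "?D \<in> carrier_mat (sum_list rs) (sum_list rs)" by (rule jnd_carrier)
  have eq: "(jordan_nilp_diag (r#rs) :: 'a mat) = four_block_mat (lower_jordan_zero r) (0\<^sub>m r (sum_list rs)) (0\<^sub>m (sum_list rs) r) ?D"
    using D unfolding jordan_nilp_diag_def by (simp add: Let_def lower_jordan_zero_def)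
  have r: "r > 0" using Cons by simp
  show ?case
  proof (cases "i < r")
    case True
    then show ?thesis using Cons.prems r unfolding eq using D
      by (auto simp: lower_jordan_zero_def)
  next
    case False
    note iF = False
    show ?thesis
    proof (cases "j < r")
      case True
      have "rs \<noteq> []" using Cons.prems False by auto
      then have "0 \<in> starts rs" by (rule zero_in_starts)
      then have "r \<in> (+) r ` starts rs" by force
      moreover have "i = Suc j \<Longrightarrow> Suc j \<in> (+) r ` starts rs" using True False calculation
        by (intro image_eqI[of _ _ 0]) auto
      ultimately show ?thesis using Cons.prems r True False unfolding eq using D
        by (auto simp: lower_jordan_zero_def)
    next
      case False
      have IH: "?D $$ (i - r, j - r) = (if i - r = Suc (j - r) \<and> i - r \<notin> starts rs then 1 else 0)"
        using Cons False iF by auto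
      have "(i \<in> starts (r#rs)) = (i - r \<in> starts rs)" using iF r
        by (auto simp: image_iff) (metis add_diff_inverse_nat)
      then show ?thesis using IH Cons.prems r False iF unfolding eq using D
        by (auto simp: lower_jordan_zero_def Suc_diff_le)
    qed
  qed
qed

lemma zero_mat_mult_vec[simp]: "x \<in> carrier_vec n \<Longrightarrow> (0\<^sub>m m n :: 'a::field mat) *\<^sub>v x = 0\<^sub>v m"
  by (intro eq_vecI) auto

lemma mat_mult_zero_vec[simp]: "(B::'a::field mat) \<in> carrier_mat m n \<Longrightarrow> B *\<^sub>v 0\<^sub>v n = 0\<^sub>v m"
  by (intro eq_vecI) auto

lemma pow_vec_carrier[simp]: "(B::'a::field mat) \<in> carrier_mat n n \<Longrightarrow> x \<in> carrier_vec n \<Longrightarrow> (B ^\<^sub>m k) *\<^sub>v x \<in> carrier_vec n"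
  by (metis mult_mat_vec_carrier pow_carrier_mat)

lemma pow_Suc_vec':
  assumes B: "(B::'a::field mat) \<in> carrier_mat n n" and x: "x \<in> carrier_vec n"
  shows "(B ^\<^sub>m Suc k) *\<^sub>v x = (B ^\<^sub>m k) *\<^sub>v (B *\<^sub>v x)"
  using assoc_mult_mat_vec[OF pow_carrier_mat[OF B, of k] B x] by simp

lemma pow_Suc_vec:
  assumes B: "(B::'a::field mat) \<in> carrier_mat n n" and x: "x \<in> carrier_vec n"
  shows "(B ^\<^sub>m Suc k) *\<^sub>v x = B *\<^sub>v ((B ^\<^sub>m k) *\<^sub>v x)"
  using x
proof (induction k arbitrary: x)
  case 0 then show ?case using B by simp
next
  case (Suc k)
  have "(B ^\<^sub>m Suc (Suc k)) *\<^sub>v x = (B ^\<^sub>m Suc k) *\<^sub>v (B *\<^sub>v x)"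
    using pow_Suc_vec'[OF B Suc.prems] .
  also have "\<dots> = B *\<^sub>v ((B ^\<^sub>m k) *\<^sub>v (B *\<^sub>v x))" using Suc.IH[of "B *\<^sub>v x"] B Suc.prems by simp
  also have "(B ^\<^sub>m k) *\<^sub>v (B *\<^sub>v x) = (B ^\<^sub>m Suc k) *\<^sub>v x" using pow_Suc_vec'[OF B Suc.prems] by simp
  finally show ?case .
qed


lemma pow_add_vec:
  assumes B: "(B::'a::field mat) \<in> carrier_mat n n" and x: "x \<in> carrier_vec n"
  shows "(B ^\<^sub>m (a + b)) *\<^sub>v x = (B ^\<^sub>m a) *\<^sub>v ((B ^\<^sub>m b) *\<^sub>v x)"
proof (induction a)
  case 0 then show ?case using B x by (simp add: pow_vec_carrier)
next
  case (Suc a)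
  then show ?case using pow_Suc_vec[OF B] B x by simp
qed

lemma mat_eq_from_vec:
  assumes "(M::'a::field mat) \<in> carrier_mat n n" "\<And>x. x \<in> carrier_vec n \<Longrightarrow> M *\<^sub>v x = 0\<^sub>v n"
  shows "M = 0\<^sub>m n n"
proof (rule eq_matI)
  fix i j assume ij: "i < dim_row (0\<^sub>m n n :: 'a mat)" "j < dim_col (0\<^sub>m n n :: 'a mat)"
  have "(M *\<^sub>v unit_vec n j) $ i = M $$ (i,j)" using assms(1) ij by simp
  then show "M $$ (i,j) = 0\<^sub>m n n $$ (i,j)" using assms(2)[of "unit_vec n j"] ij by simp
qed (use assms in auto)

lemma nilpotent_iff_vec:
  assumes B: "(B::'a::field mat) \<in> carrier_mat n n"
  shows "nilpotent_mat B \<longleftrightarrow> (\<exists>k. \<forall>x\<in>carrier_vec n. (B ^\<^sub>m k) *\<^sub>v x = 0\<^sub>v n)"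
proof
  assume "nilpotent_mat B"
  then obtain k where k: "B ^\<^sub>m k = 0\<^sub>m n n" using B unfolding nilpotent_mat_def by auto
  show "\<exists>k. \<forall>x\<in>carrier_vec n. (B ^\<^sub>m k) *\<^sub>v x = 0\<^sub>v n"
  proof (intro exI[of _ k] ballI)
    fix x :: "'a vec" assume "x \<in> carrier_vec n"
    then show "(B ^\<^sub>m k) *\<^sub>v x = 0\<^sub>v n" unfolding k by simp
  qed
next
  assume "\<exists>k. \<forall>x\<in>carrier_vec n. (B ^\<^sub>m k) *\<^sub>v x = 0\<^sub>v n"
  then obtain k where "\<forall>x\<in>carrier_vec n. (B ^\<^sub>m k) *\<^sub>v x = 0\<^sub>v n" by auto
  then have "B ^\<^sub>m k = 0\<^sub>m n n" using B by (intro mat_eq_from_vec) auto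
  then show "nilpotent_mat B" using B unfolding nilpotent_mat_def by auto
qed

lemma semi_idempotent_iff_vec:
  assumes B: "(B::'a::field mat) \<in> carrier_mat n n"
  shows "semi_idempotent n B \<longleftrightarrow> (\<exists>N. \<forall>x\<in>carrier_vec n. (B ^\<^sub>m Suc N) *\<^sub>v x = (B ^\<^sub>m N) *\<^sub>v x)"
proof
  assume "semi_idempotent n B"
  then obtain X Y :: "'a vec set" and k where X: "is_subspace_vec n X" and Y: "is_subspace_vec n Y"
    and dec: "\<forall>v\<in>carrier_vec n. \<exists>x\<in>X. \<exists>y\<in>Y. v = x + y"
    and YB: "\<forall>y\<in>Y. B *\<^sub>v y \<in> Y" and XB: "\<forall>x\<in>X. B *\<^sub>v x = x"
    and Yk: "\<forall>y\<in>Y. (B ^\<^sub>m k) *\<^sub>v y = 0\<^sub>v n"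
    unfolding semi_idempotent_def by blast
  have Xc: "X \<subseteq> carrier_vec n" and Yc: "Y \<subseteq> carrier_vec n" using X Y unfolding is_subspace_vec_def by auto
  have Xp: "(B ^\<^sub>m j) *\<^sub>v x = x" if "x \<in> X" for x j
  proof (induction j)
    case 0 then show ?case using that Xc B by auto
  next
    case (Suc j) then show ?case using pow_Suc_vec[OF B, of x j] that Xc XB by auto
  qed
  show "\<exists>N. \<forall>x\<in>carrier_vec n. (B ^\<^sub>m Suc N) *\<^sub>v x = (B ^\<^sub>m N) *\<^sub>v x"
  proof (intro exI ballI)
    fix w :: "'a vec" assume w: "w \<in> carrier_vec n"
    then obtain x y where xy: "(x::'a vec) \<in> X" "y \<in> Y" "w = x + y" using dec by blast
    have xc: "x \<in> carrier_vec n" and yc: "y \<in> carrier_vec n" using xy Xc Yc by auto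
    have "(B ^\<^sub>m Suc k) *\<^sub>v y = (B ^\<^sub>m k) *\<^sub>v (B *\<^sub>v y)" using pow_Suc_vec'[OF B yc] .
    also have "\<dots> = 0\<^sub>v n" using Yk YB xy by auto
    finally have y1: "(B ^\<^sub>m Suc k) *\<^sub>v y = 0\<^sub>v n" .
    have "(B ^\<^sub>m Suc k) *\<^sub>v w = (B ^\<^sub>m Suc k) *\<^sub>v x + (B ^\<^sub>m Suc k) *\<^sub>v y"
      unfolding xy(3) by (rule mult_add_distrib_mat_vec[OF pow_carrier_mat[OF B] xc yc])
    also have "\<dots> = x" by (simp only: y1 Xp[OF xy(1)]) (simp add: xc)
    also have "x = (B ^\<^sub>m k) *\<^sub>v x + (B ^\<^sub>m k) *\<^sub>v y" using Yk xy Xp[OF xy(1)] xc by simp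
    also have "\<dots> = (B ^\<^sub>m k) *\<^sub>v w"
      unfolding xy(3) by (rule mult_add_distrib_mat_vec[OF pow_carrier_mat[OF B] xc yc, symmetric])
    finally show "(B ^\<^sub>m Suc k) *\<^sub>v w = (B ^\<^sub>m k) *\<^sub>v w" .
  qed
next
  assume "\<exists>N. \<forall>x\<in>carrier_vec n. (B ^\<^sub>m Suc N) *\<^sub>v x = (B ^\<^sub>m N) *\<^sub>v x"
  then obtain N where N: "\<forall>x\<in>carrier_vec n. (B ^\<^sub>m Suc N) *\<^sub>v x = (B ^\<^sub>m N) *\<^sub>v x" by auto
  have NN: "(B ^\<^sub>m (j + N)) *\<^sub>v x = (B ^\<^sub>m N) *\<^sub>v x" if x: "x \<in> carrier_vec n" for x j
  proof (induction j)
    case 0 then show ?case by simp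
  next
    case (Suc j)
    have "(B ^\<^sub>m (Suc j + N)) *\<^sub>v x = B *\<^sub>v ((B ^\<^sub>m (j + N)) *\<^sub>v x)"
      using pow_Suc_vec[OF B x] by simp
    also have "\<dots> = B *\<^sub>v ((B ^\<^sub>m N) *\<^sub>v x)" using Suc by simp
    also have "\<dots> = (B ^\<^sub>m Suc N) *\<^sub>v x" using pow_Suc_vec[OF B x] by simp
    finally show ?case using N x by simp
  qed
  define X where "X = {x\<in>carrier_vec n. B *\<^sub>v x = x}"
  define Y where "Y = {y\<in>carrier_vec n. (B ^\<^sub>m N) *\<^sub>v y = 0\<^sub>v n}"
  have Xfix: "(B ^\<^sub>m j) *\<^sub>v x = x" if "x \<in> X" for x j
  proof (induction j)
    case 0 then show ?case using that B by (auto simp: X_def)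
  next
    case (Suc j) then show ?case using pow_Suc_vec[OF B, of x j] that by (auto simp: X_def)
  qed
  have sX: "is_subspace_vec n X" unfolding is_subspace_vec_def X_def
    using B by (auto simp: mult_add_distrib_mat_vec[of _ n n] mult_mat_vec)
  have sY: "is_subspace_vec n Y" unfolding is_subspace_vec_def Y_def
    using B by (auto simp: mult_add_distrib_mat_vec[OF pow_carrier_mat[OF B]] mult_mat_vec[OF pow_carrier_mat[OF B]])
  have XY: "X \<inter> Y = {0\<^sub>v n}"
  proof
    show "X \<inter> Y \<subseteq> {0\<^sub>v n}" using Xfix by (auto simp: Y_def)
    show "{0\<^sub>v n} \<subseteq> X \<inter> Y" using B by (auto simp: X_def Y_def)
  qed
  have dec: "\<forall>w\<in>carrier_vec n. \<exists>x\<in>X. \<exists>y\<in>Y. w = x + y"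
  proof
    fix w :: "'a vec" assume w: "w \<in> carrier_vec n"
    let ?x = "(B ^\<^sub>m N) *\<^sub>v w"
    have xc: "?x \<in> carrier_vec n" using B w by simp
    have "B *\<^sub>v ?x = ?x" using pow_Suc_vec[OF B w, of N] N w by simp
    then have "?x \<in> X" using xc by (simp add: X_def)
    moreover have "(B ^\<^sub>m N) *\<^sub>v (w - ?x) = 0\<^sub>v n"
    proof -
      have "(B ^\<^sub>m N) *\<^sub>v (w - ?x) = (B ^\<^sub>m N) *\<^sub>v w - (B ^\<^sub>m N) *\<^sub>v ?x"
        using B w xc by (simp add: mult_minus_distrib_mat_vec[of _ n n])
      also have "(B ^\<^sub>m N) *\<^sub>v ?x = (B ^\<^sub>m (N + N)) *\<^sub>v w" using pow_add_vec[OF B w] by simp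
      also have "\<dots> = ?x" using NN[OF w, of N] by simp
      finally show ?thesis using xc by simp
    qed
    then have "w - ?x \<in> Y" using w xc by (simp add: Y_def)
    moreover have "w = ?x + (w - ?x)" using w xc B by (intro eq_vecI) auto
    ultimately show "\<exists>x\<in>X. \<exists>y\<in>Y. w = x + y" by blast
  qed
  have BX: "\<forall>x\<in>X. B *\<^sub>v x \<in> X" by (auto simp: X_def)
  have BY: "\<forall>y\<in>Y. B *\<^sub>v y \<in> Y"
  proof
    fix y :: "'a vec" assume y: "y \<in> Y"
    then have yc: "y \<in> carrier_vec n" by (simp add: Y_def)
    have "(B ^\<^sub>m N) *\<^sub>v (B *\<^sub>v y) = (B ^\<^sub>m Suc N) *\<^sub>v y" using pow_Suc_vec'[OF B yc] by simp
    also have "\<dots> = B *\<^sub>v ((B ^\<^sub>m N) *\<^sub>v y)" using pow_Suc_vec[OF B yc] .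
    also have "\<dots> = 0\<^sub>v n" using y B by (simp add: Y_def)
    finally show "B *\<^sub>v y \<in> Y" using B yc by (simp add: Y_def)
  qed
  have Yk: "\<forall>y\<in>Y. (B ^\<^sub>m N) *\<^sub>v y = 0\<^sub>v n" by (simp add: Y_def)
  have XX: "\<forall>x\<in>X. B *\<^sub>v x = x" by (simp add: X_def)
  show "semi_idempotent n B" unfolding semi_idempotent_def
    using B sX sY XY dec BX BY XX Yk by blast
qed

locale setting =
  fixes n p :: nat and S :: "nat set" and A :: "'a::field mat" and v :: "'a vec"
  assumes A_carr: "A \<in> carrier_mat n n"
  and A_ent: "\<And>i j. i < n \<Longrightarrow> j < n \<Longrightarrow> A $$ (i,j) = (if i = Suc j \<and> i \<notin> S then 1 else 0)"
  and S_sub: "S \<subseteq> {..<n}" and zero_S: "0 \<in> S" and p_S: "p \<in> S" and S_p: "\<And>i. i \<in> S \<Longrightarrow> i \<le> p"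
  and v: "v \<in> carrier_vec n"
begin

definition B where "B = replace_last_col A v"

lemma pn: "p < n" using p_S S_sub by auto

lemma B_carr: "B \<in> carrier_mat n n" using A_carr by (auto simp: B_def replace_last_col_def)

lemma B_dims[simp]: "dim_row B = n" "dim_col B = n" using B_carr by auto

lemma B_ent: "i < n \<Longrightarrow> j < n \<Longrightarrow> B $$ (i,j) = (if j = n - 1 then v $ i else if i = Suc j \<and> i \<notin> S then 1 else 0)"
  using A_carr A_ent by (auto simp: B_def replace_last_col_def)

lemma B_mult: assumes x: "x \<in> carrier_vec n" and i: "i < n"
  shows "(B *\<^sub>v x) $ i = (if i \<in> S then 0 else x $ (i - 1)) + v $ i * x $ (n - 1)"
proof -
  have "(B *\<^sub>v x) $ i = (\<Sum>j\<in>{0..<n}. B $$ (i,j) * x $ j)"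
    using B_carr x i by (simp add: scalar_prod_def)
  also have "{0..<n} = insert (n-1) {0..<n-1}" using pn by auto
  also have "(\<Sum>j\<in>insert (n-1) {0..<n-1}. B $$ (i,j) * x $ j)
      = B $$ (i,n-1) * x $ (n-1) + (\<Sum>j\<in>{0..<n-1}. B $$ (i,j) * x $ j)"
    by (subst sum.insert) auto
  also have "(\<Sum>j\<in>{0..<n-1}. B $$ (i,j) * x $ j)
      = (\<Sum>j\<in>{0..<n-1}. if j = i - 1 then (if i \<in> S then 0 else x $ j) else 0)"
  proof (rule sum.cong)
    fix j assume "j \<in> {0..<n-1}"
    then show "B $$ (i,j) * x $ j = (if j = i - 1 then (if i \<in> S then 0 else x $ j) else 0)"
      using i zero_S by (cases "i = 0") (auto simp: B_ent)
  qed simp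
  also have "\<dots> = (if i \<in> S then 0 else x $ (i - 1))"
    using i zero_S by (cases "i = 0") (auto simp: sum.delta)
  finally show ?thesis using B_ent i pn by simp
qed

definition LZ :: "'a vec \<Rightarrow> bool" where "LZ x \<longleftrightarrow> (\<forall>i. p \<le> i \<and> i < n \<longrightarrow> x $ i = 0)"

lemma LZ_step: assumes x: "x \<in> carrier_vec n" and L: "LZ x" shows "LZ (B *\<^sub>v x)"
  unfolding LZ_def
proof (intro allI impI)
  fix i assume i: "p \<le> i \<and> i < n"
  have "x $ (n-1) = 0" using L pn unfolding LZ_def by auto
  moreover have "i \<notin> S \<Longrightarrow> x $ (i - 1) = 0"
  proof -
    assume "i \<notin> S"
    then have "p \<le> i - 1" "i - 1 < n" using i p_S by (cases "i = p", auto)+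
    then show ?thesis using L unfolding LZ_def by auto
  qed
  ultimately show "(B *\<^sub>v x) $ i = 0" using B_mult[OF x] i by auto
qed

lemma LZ_pow: assumes x: "x \<in> carrier_vec n" and L: "LZ x" shows "LZ ((B ^\<^sub>m k) *\<^sub>v x)"
proof (induction k)
  case 0 then show ?case using x L by simp
next
  case (Suc k) then show ?case using LZ_step[of "(B ^\<^sub>m k) *\<^sub>v x"] pow_Suc_vec[OF B_carr x] B_carr x by simp
qed

lemma LZ_kill: assumes x: "x \<in> carrier_vec n" and L: "LZ x" shows "(B ^\<^sub>m n) *\<^sub>v x = 0\<^sub>v n"
proof -
  have claim: "\<forall>i<n. ((B ^\<^sub>m k) *\<^sub>v x) $ i \<noteq> 0 \<longrightarrow> k \<le> i" for k
  proof (induction k)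
    case 0 then show ?case by simp
  next
    case (Suc k)
    show ?case
    proof (intro allI impI)
      fix i assume i: "i < n" and nz: "((B ^\<^sub>m Suc k) *\<^sub>v x) $ i \<noteq> 0"
      let ?y = "(B ^\<^sub>m k) *\<^sub>v x"
      have yc: "?y \<in> carrier_vec n" using B_carr x by simp
      have "?y $ (n-1) = 0" using LZ_pow[OF x L, of k] pn unfolding LZ_def by auto
      then have "(B *\<^sub>v ?y) $ i = (if i \<in> S then 0 else ?y $ (i - 1))" using B_mult[OF yc i] by simp
      moreover have "(B ^\<^sub>m Suc k) *\<^sub>v x = B *\<^sub>v ?y" using pow_Suc_vec[OF B_carr x] .
      ultimately have "i \<notin> S" "?y $ (i - 1) \<noteq> 0" using nz by (auto split: if_splits)
      moreover have "i \<noteq> 0" using \<open>i \<notin> S\<close> zero_S by metis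
      ultimately have "k \<le> i - 1" using Suc.IH i by auto
      then show "Suc k \<le> i" using \<open>i \<noteq> 0\<close> by arith
    qed
  qed
  show ?thesis using claim[of n] B_carr x by (intro eq_vecI) auto
qed

definition W0 where "W0 \<longleftrightarrow> (\<forall>i. p \<le> i \<and> i < n \<longrightarrow> v $ i = 0)"
definition W1 where "W1 \<longleftrightarrow> (\<forall>i. p \<le> i \<and> i < n \<longrightarrow> v $ i = (if i = n - 1 then 1 else 0))"

lemma W0_nil: assumes W: W0 shows "nilpotent_mat B"
proof -
  have claim: "\<forall>i. p \<le> i \<and> i < n \<and> i < p + k \<longrightarrow> ((B ^\<^sub>m k) *\<^sub>v x) $ i = 0" if x: "x \<in> carrier_vec n" for x k
  proof (induction k)
    case 0 then show ?case by auto
  next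
    case (Suc k)
    show ?case
    proof (intro allI impI)
      fix i assume i: "p \<le> i \<and> i < n \<and> i < p + Suc k"
      let ?y = "(B ^\<^sub>m k) *\<^sub>v x"
      have yc: "?y \<in> carrier_vec n" using B_carr x by simp
      have "(B ^\<^sub>m Suc k) *\<^sub>v x = B *\<^sub>v ?y" using pow_Suc_vec[OF B_carr x] .
      moreover have "(B *\<^sub>v ?y) $ i = (if i \<in> S then 0 else ?y $ (i - 1))"
        using B_mult[OF yc] i W unfolding W0_def by simp
      moreover have "i \<notin> S \<Longrightarrow> ?y $ (i - 1) = 0"
      proof -
        assume "i \<notin> S"
        then have "p \<le> i - 1" "i - 1 < n" "i - 1 < p + k" using i p_S by (cases "i = p", auto)+
        then show ?thesis using Suc.IH by auto
      qed
      ultimately show "((B ^\<^sub>m Suc k) *\<^sub>v x) $ i = 0" by simp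
    qed
  qed
  have "\<forall>x\<in>carrier_vec n. (B ^\<^sub>m (n + (n - p))) *\<^sub>v x = 0\<^sub>v n"
  proof
    fix x :: "'a vec" assume x: "x \<in> carrier_vec n"
    have "LZ ((B ^\<^sub>m (n - p)) *\<^sub>v x)" using claim[OF x, of "n - p"] unfolding LZ_def by auto
    then show "(B ^\<^sub>m (n + (n - p))) *\<^sub>v x = 0\<^sub>v n"
      using LZ_kill[of "(B ^\<^sub>m (n - p)) *\<^sub>v x"] pow_add_vec[OF B_carr x] B_carr x by simp
  qed
  then show ?thesis using nilpotent_iff_vec[OF B_carr] by blast
qed

end

context setting begin

definition LE :: "'a vec \<Rightarrow> 'a vec \<Rightarrow> bool" where
  "LE x y \<longleftrightarrow> (\<forall>i. p \<le> i \<and> i < n \<longrightarrow> x $ i = y $ i)"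

lemma LE_step: assumes x: "x \<in> carrier_vec n" and y: "y \<in> carrier_vec n" and L: "LE x y"
  shows "LE (B *\<^sub>v x) (B *\<^sub>v y)"
  unfolding LE_def
proof (intro allI impI)
  fix i assume i: "p \<le> i \<and> i < n"
  have "x $ (n-1) = y $ (n-1)" using L pn unfolding LE_def by auto
  moreover have "i \<notin> S \<Longrightarrow> x $ (i - 1) = y $ (i - 1)"
  proof -
    assume "i \<notin> S"
    then have "p \<le> i - 1" "i - 1 < n" using i p_S by (cases "i = p", auto)+
    then show ?thesis using L unfolding LE_def by auto
  qed
  ultimately show "(B *\<^sub>v x) $ i = (B *\<^sub>v y) $ i" using B_mult[OF x] B_mult[OF y] i by auto
qed

lemma exists_m: assumes "\<not> W0"
  shows "\<exists>m. p \<le> m \<and> m < n \<and> v $ m \<noteq> 0 \<and> (\<forall>i. p \<le> i \<and> i < m \<longrightarrow> v $ i = 0)"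
proof -
  let ?P = "\<lambda>m. p \<le> m \<and> m < n \<and> v $ m \<noteq> 0"
  obtain m0 where "?P m0" using assms unfolding W0_def by auto
  define m where "m = (LEAST m. ?P m)"
  have "?P m" using LeastI[of ?P m0] \<open>?P m0\<close> by (simp add: m_def)
  moreover have "\<forall>i. p \<le> i \<and> i < m \<longrightarrow> v $ i = 0"
  proof (intro allI impI)
    fix i assume i: "p \<le> i \<and> i < m"
    then have "\<not> ?P i" using not_less_Least[of i ?P] by (simp add: m_def)
    then show "v $ i = 0" using i \<open>?P m\<close> by auto
  qed
  ultimately show ?thesis by blast
qed

context
  fixes m :: nat assumes m: "p \<le> m" "m < n" "v $ m \<noteq> 0" "\<forall>i. p \<le> i \<and> i < m \<longrightarrow> v $ i = 0"
begin

lemma surj1: assumes z: "z \<in> carrier_vec n" and z0: "\<forall>i<m. z $ i = 0"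
  shows "\<exists>x\<in>carrier_vec n. (\<forall>i<m. x $ i = 0) \<and> LE (B *\<^sub>v x) z"
proof -
  define c where "c = z $ m / v $ m"
  define x where "x = vec n (\<lambda>j. if j < m then 0 else if j = n - 1 then c else z $ Suc j - v $ Suc j * c)"
  have xc: "x \<in> carrier_vec n" by (simp add: x_def)
  have x0: "\<forall>i<m. x $ i = 0" using m by (simp add: x_def)
  have xn: "x $ (n-1) = c" using m by (simp add: x_def)
  have "LE (B *\<^sub>v x) z" unfolding LE_def
  proof (intro allI impI)
    fix i assume i: "p \<le> i \<and> i < n"
    have Bx: "(B *\<^sub>v x) $ i = (if i \<in> S then 0 else x $ (i - 1)) + v $ i * c"
      using B_mult[OF xc] i xn by simp
    show "(B *\<^sub>v x) $ i = z $ i"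
    proof (cases "i < m")
      case True
      have "i \<notin> S \<Longrightarrow> x $ (i - 1) = 0" using x0 True by auto
      then show ?thesis using Bx True m z0 i by auto
    next
      case False
      show ?thesis
      proof (cases "i = m")
        case True
        have "i \<notin> S \<Longrightarrow> x $ (i - 1) = 0" using x0 True zero_S
          by (metis diff_less less_numeral_extra(1) not_gr_zero)
        then show ?thesis using Bx True m by (auto simp: c_def)
      next
        case False
        then have im: "m < i" using \<open>\<not> i < m\<close> by simp
        then have "i \<notin> S" using S_p m by fastforce
        moreover have "x $ (i - 1) = z $ i - v $ i * c"
        proof -
          have "i - 1 < n" "\<not> i - 1 < m" "i - 1 \<noteq> n - 1" "Suc (i - 1) = i" using im i by auto
          then show ?thesis by (simp add: x_def)
        qed
        ultimately show ?thesis using Bx by simp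
      qed
    qed
  qed
  then show ?thesis using xc x0 by blast
qed

lemma surjk: "z \<in> carrier_vec n \<Longrightarrow> \<forall>i<m. z $ i = 0 \<Longrightarrow>
  \<exists>x\<in>carrier_vec n. (\<forall>i<m. x $ i = 0) \<and> LE ((B ^\<^sub>m k) *\<^sub>v x) z"
proof (induction k arbitrary: z)
  case 0
  then show ?case by (intro bexI[of _ z]) (auto simp: LE_def)
next
  case (Suc k)
  obtain x1 where x1: "x1 \<in> carrier_vec n" "\<forall>i<m. x1 $ i = 0" "LE (B *\<^sub>v x1) z"
    using surj1[OF Suc.prems] by blast
  obtain x where x: "x \<in> carrier_vec n" "\<forall>i<m. x $ i = 0" "LE ((B ^\<^sub>m k) *\<^sub>v x) x1"
    using Suc.IH[OF x1(1,2)] by blast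
  have "LE (B *\<^sub>v ((B ^\<^sub>m k) *\<^sub>v x)) (B *\<^sub>v x1)"
    using LE_step[OF _ x1(1) x(3)] B_carr x by simp
  then have "LE ((B ^\<^sub>m Suc k) *\<^sub>v x) z" using x1(3) pow_Suc_vec[OF B_carr x(1)]
    unfolding LE_def by auto
  then show ?case using x by blast
qed

lemma m_not_nil: "\<not> nilpotent_mat B"
proof
  assume "nilpotent_mat B"
  then obtain k where k: "\<forall>x\<in>carrier_vec n. (B ^\<^sub>m k) *\<^sub>v x = 0\<^sub>v n"
    using nilpotent_iff_vec[OF B_carr] by blast
  obtain x where x: "x \<in> carrier_vec n" "LE ((B ^\<^sub>m k) *\<^sub>v x) (unit_vec n m)"
    using surjk[of "unit_vec n m" k] m by auto
  then show False using k m unfolding LE_def by auto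
qed

lemma m_idem: assumes N: "\<forall>x\<in>carrier_vec n. (B ^\<^sub>m Suc N) *\<^sub>v x = (B ^\<^sub>m N) *\<^sub>v x"
  shows W1
proof -
  let ?e = "unit_vec n (n - 1) :: 'a vec"
  have e0: "\<forall>i<m. ?e $ i = 0" using m by auto
  obtain x where x: "x \<in> carrier_vec n" "LE ((B ^\<^sub>m N) *\<^sub>v x) ?e"
    using surjk[of ?e N, OF _ e0] by auto
  have "LE (B *\<^sub>v ((B ^\<^sub>m N) *\<^sub>v x)) (B *\<^sub>v ?e)"
    using LE_step[OF _ _ x(2)] B_carr x by simp
  moreover have "B *\<^sub>v ((B ^\<^sub>m N) *\<^sub>v x) = (B ^\<^sub>m N) *\<^sub>v x"
    using pow_Suc_vec[OF B_carr x(1), of N] N x(1) by metis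
  ultimately have L: "LE ?e (B *\<^sub>v ?e)" using x(2) unfolding LE_def by auto
  show W1 unfolding W1_def
  proof (intro allI impI)
    fix i assume i: "p \<le> i \<and> i < n"
    have "(B *\<^sub>v ?e) $ i = (if i \<in> S then 0 else ?e $ (i - 1)) + v $ i"
      using B_mult[of ?e i] i pn by simp
    moreover have "i \<notin> S \<Longrightarrow> ?e $ (i - 1) = 0" using i zero_S by (cases "i = 0") auto
    ultimately have "(B *\<^sub>v ?e) $ i = v $ i" by auto
    then show "v $ i = (if i = n - 1 then 1 else 0)" using L i unfolding LE_def by auto
  qed
qed

end

lemma nil_iff: "nilpotent_mat B \<longleftrightarrow> W0"
  using W0_nil exists_m m_not_nil by blast

end

context setting begin

definition phi :: "'a vec \<Rightarrow> 'a" where "phi x = (\<Sum>i\<in>{p..<n}. x $ i)"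

context assumes W: W1
begin

lemma phi_step: assumes x: "x \<in> carrier_vec n" shows "phi (B *\<^sub>v x) = phi x"
proof -
  have "phi (B *\<^sub>v x) = (\<Sum>i\<in>{p..<n}. (if i \<in> S then 0 else x $ (i - 1)) + v $ i * x $ (n - 1))"
    unfolding phi_def by (rule sum.cong) (auto simp del: index_mult_mat_vec simp: B_mult[OF x])
  also have "\<dots> = (\<Sum>i\<in>{p..<n}. (if i \<in> S then 0 else x $ (i - 1))) + (\<Sum>i\<in>{p..<n}. v $ i * x $ (n - 1))"
    by (rule sum.distrib)
  also have "(\<Sum>i\<in>{p..<n}. v $ i * x $ (n - 1)) = (\<Sum>i\<in>{p..<n}. if i = n - 1 then x $ (n - 1) else 0)"
    by (rule sum.cong) (use W in \<open>auto simp: W1_def\<close>)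
  also have "\<dots> = x $ (n - 1)" using pn by (simp add: sum.delta)
  also have "{p..<n} = insert p {Suc p..<n}" using pn by auto
  also have "(\<Sum>i\<in>insert p {Suc p..<n}. (if i \<in> S then 0 else x $ (i - 1)))
     = (\<Sum>i\<in>{Suc p..<n}. (if i \<in> S then 0 else x $ (i - 1)))"
    using p_S by (subst sum.insert) auto
  also have "\<dots> = (\<Sum>i\<in>{Suc p..<Suc (n - 1)}. x $ (i - 1))"
    using S_p pn by (intro sum.cong) fastforce+
  also have "\<dots> = (\<Sum>i\<in>{p..<n - 1}. x $ i)"
    by (subst sum.shift_bounds_Suc_ivl) simp
  also have "(\<Sum>i\<in>{p..<n - 1}. x $ i) + x $ (n - 1) = (\<Sum>i\<in>{p..<Suc (n - 1)}. x $ i)"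
    using pn by (subst sum.atLeastLessThan_Suc) auto
  also have "Suc (n - 1) = n" using pn by simp
  finally show ?thesis unfolding phi_def .
qed

lemma phi_pow: assumes x: "x \<in> carrier_vec n" shows "phi ((B ^\<^sub>m k) *\<^sub>v x) = phi x"
proof (induction k)
  case 0 then show ?case using x by simp
next
  case (Suc k) then show ?case using phi_step[of "(B ^\<^sub>m k) *\<^sub>v x"] pow_Suc_vec[OF B_carr x] B_carr x by simp
qed

lemma phi_kill: assumes y: "y \<in> carrier_vec n" and py: "phi y = 0"
  shows "(B ^\<^sub>m (n + (n - 1 - p))) *\<^sub>v y = 0\<^sub>v n"
proof -
  have claim: "\<forall>i. p \<le> i \<and> i < n - 1 \<and> i < p + k \<longrightarrow> ((B ^\<^sub>m k) *\<^sub>v y) $ i = 0" for k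
  proof (induction k)
    case 0 then show ?case by auto
  next
    case (Suc k)
    show ?case
    proof (intro allI impI)
      fix i assume i: "p \<le> i \<and> i < n - 1 \<and> i < p + Suc k"
      let ?y = "(B ^\<^sub>m k) *\<^sub>v y"
      have yc: "?y \<in> carrier_vec n" using B_carr y by simp
      have "(B ^\<^sub>m Suc k) *\<^sub>v y = B *\<^sub>v ?y" using pow_Suc_vec[OF B_carr y] .
      moreover have "(B *\<^sub>v ?y) $ i = (if i \<in> S then 0 else ?y $ (i - 1))"
      proof -
        have "v $ i = 0" "i < n" using W i unfolding W1_def by auto
        then show ?thesis using B_mult[OF yc, of i] by (simp del: index_mult_mat_vec)
      qed
      moreover have "i \<notin> S \<Longrightarrow> ?y $ (i - 1) = 0"
      proof -
        assume "i \<notin> S"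
        then have "p \<le> i - 1" "i - 1 < n - 1" "i - 1 < p + k" using i p_S by (cases "i = p", auto)+
        then show ?thesis using Suc.IH by auto
      qed
      ultimately show "((B ^\<^sub>m Suc k) *\<^sub>v y) $ i = 0" by simp
    qed
  qed
  let ?z = "(B ^\<^sub>m (n - 1 - p)) *\<^sub>v y"
  have zc: "?z \<in> carrier_vec n" using B_carr y by simp
  have z1: "\<forall>i. p \<le> i \<and> i < n - 1 \<longrightarrow> ?z $ i = 0" using claim[of "n - 1 - p"] by auto
  have "phi ?z = 0" using phi_pow[OF y] py by simp
  moreover have "phi ?z = (\<Sum>i\<in>{p..<n - 1}. ?z $ i) + ?z $ (n - 1)"
    unfolding phi_def using pn sum.atLeastLessThan_Suc[of p "n - 1" "\<lambda>i. ?z $ i"] by simp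
  moreover have "(\<Sum>i\<in>{p..<n - 1}. ?z $ i) = 0" using z1 by simp
  ultimately have "?z $ (n - 1) = 0" by simp
  then have "LZ ?z" using z1 unfolding LZ_def
  proof (intro allI impI)
    fix i assume "p \<le> i \<and> i < n"
    then show "?z $ i = 0" using z1 \<open>?z $ (n - 1) = 0\<close> by (cases "i = n - 1") auto
  qed
  then have "(B ^\<^sub>m n) *\<^sub>v ?z = 0\<^sub>v n" using LZ_kill[OF zc] by simp
  then show ?thesis using pow_add_vec[OF B_carr y] by simp
qed

lemma W1_idem: "\<exists>N. \<forall>x\<in>carrier_vec n. (B ^\<^sub>m Suc N) *\<^sub>v x = (B ^\<^sub>m N) *\<^sub>v x"
proof (intro exI ballI)
  fix x :: "'a vec" assume x: "x \<in> carrier_vec n"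
  let ?N = "n + (n - 1 - p)"
  let ?y = "B *\<^sub>v x - x"
  have Bx: "B *\<^sub>v x \<in> carrier_vec n" using B_carr x by simp
  have yc: "?y \<in> carrier_vec n" using Bx x by simp
  have "phi ?y = phi (B *\<^sub>v x) - phi x"
    unfolding phi_def using x Bx pn by (simp add: sum_subtractf)
  then have "phi ?y = 0" using phi_step[OF x] by simp
  then have "(B ^\<^sub>m ?N) *\<^sub>v ?y = 0\<^sub>v n" using phi_kill[OF yc] by simp
  moreover have "(B ^\<^sub>m ?N) *\<^sub>v ?y = (B ^\<^sub>m ?N) *\<^sub>v (B *\<^sub>v x) - (B ^\<^sub>m ?N) *\<^sub>v x"
    by (rule mult_minus_distrib_mat_vec[OF pow_carrier_mat[OF B_carr] Bx x])
  moreover have "(B ^\<^sub>m ?N) *\<^sub>v (B *\<^sub>v x) = (B ^\<^sub>m Suc ?N) *\<^sub>v x"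
    using pow_Suc_vec'[OF B_carr x] by simp
  ultimately have eq: "(B ^\<^sub>m Suc ?N) *\<^sub>v x - (B ^\<^sub>m ?N) *\<^sub>v x = 0\<^sub>v n" by simp
  show "(B ^\<^sub>m Suc ?N) *\<^sub>v x = (B ^\<^sub>m ?N) *\<^sub>v x"
  proof (rule eq_vecI)
    fix i assume "i < dim_vec ((B ^\<^sub>m ?N) *\<^sub>v x)"
    then have i: "i < n" using B_carr by simp
    have "((B ^\<^sub>m Suc ?N) *\<^sub>v x - (B ^\<^sub>m ?N) *\<^sub>v x) $ i = 0" using eq i by simp
    then show "((B ^\<^sub>m Suc ?N) *\<^sub>v x) $ i = ((B ^\<^sub>m ?N) *\<^sub>v x) $ i" using i B_carr x by simp
  qed (use B_carr x in simp)
qed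

end

lemma si_iff: "(semi_idempotent n B \<and> \<not> nilpotent_mat B) \<longleftrightarrow> W1"
proof
  assume W: W1
  have "p \<le> n - 1" "n - 1 < n" using pn by auto
  then have "v $ (n - 1) = 1" using W unfolding W1_def by auto
  then have "\<not> W0" using \<open>p \<le> n - 1\<close> \<open>n - 1 < n\<close> unfolding W0_def by force
  then show "semi_idempotent n B \<and> \<not> nilpotent_mat B"
    using W1_idem[OF W] semi_idempotent_iff_vec[OF B_carr] nil_iff by blast
next
  assume "semi_idempotent n B \<and> \<not> nilpotent_mat B"
  then have si: "\<exists>N. \<forall>x\<in>carrier_vec n. (B ^\<^sub>m Suc N) *\<^sub>v x = (B ^\<^sub>m N) *\<^sub>v x" and "\<not> W0"
    using semi_idempotent_iff_vec[OF B_carr] nil_iff by auto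
  then obtain m where "p \<le> m \<and> m < n \<and> v $ m \<noteq> 0 \<and> (\<forall>i. p \<le> i \<and> i < m \<longrightarrow> v $ i = 0)"
    using exists_m by blast
  then show W1 using m_idem si by blast
qed

end

context vec_space begin

lemma span_units_char:
  assumes I: "I \<subseteq> {..<n}" and w: "w \<in> carrier_vec n"
  shows "w \<in> span (unit_vec n ` I) \<longleftrightarrow> (\<forall>i<n. i \<notin> I \<longrightarrow> w $ i = 0)"
proof
  assume "w \<in> span (unit_vec n ` I)"
  then obtain a A where aA: "w = lincomb a A" "finite A" "A \<subseteq> unit_vec n ` I"
    using in_spanE by blast
  have Ac: "A \<subseteq> carrier_vec n" using aA I by auto
  show "\<forall>i<n. i \<notin> I \<longrightarrow> w $ i = 0"
  proof (intro allI impI)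
    fix i assume i: "i < n" "i \<notin> I"
    have "w $ i = (\<Sum>x\<in>A. a x * x $ i)" using lincomb_index[OF i(1) Ac] aA by simp
    also have "\<dots> = 0"
    proof (rule sum.neutral, intro ballI)
      fix x assume "x \<in> A"
      then obtain j where "j \<in> I" "x = unit_vec n j" using aA by auto
      moreover have "j \<noteq> i" "j < n" using \<open>j \<in> I\<close> i I by auto
      ultimately show "a x * x $ i = 0" using i by simp
    qed
    finally show "w $ i = 0" .
  qed
next
  assume Z: "\<forall>i<n. i \<notin> I \<longrightarrow> w $ i = 0"
  let ?E = "unit_vec n ` I"
  have Ec: "?E \<subseteq> carrier_vec n" by auto
  have fin: "finite ?E" using I by (meson finite_imageI finite_lessThan finite_subset)
  have inj: "inj_on (unit_vec n :: nat \<Rightarrow> 'a vec) I"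
  proof
    fix i j assume "i \<in> I" "j \<in> I" "(unit_vec n i :: 'a vec) = unit_vec n j"
    then have "(unit_vec n i :: 'a vec) $ i = unit_vec n j $ i" by simp
    moreover have "i < n" "j < n" using \<open>i \<in> I\<close> \<open>j \<in> I\<close> I by auto
    ultimately show "i = j" by (auto split: if_splits)
  qed
  let ?a = "\<lambda>x. x \<bullet> w"
  have "w = lincomb ?a ?E"
  proof (rule eq_vecI)
    fix i assume "i < dim_vec (lincomb ?a ?E)"
    then have i: "i < n" using lincomb_dim[OF fin Ec] by simp
    have "lincomb ?a ?E $ i = (\<Sum>x\<in>?E. ?a x * x $ i)" using lincomb_index[OF i Ec] .
    also have "\<dots> = (\<Sum>j\<in>I. ?a (unit_vec n j) * unit_vec n j $ i)"
      by (rule sum.reindex[OF inj, unfolded comp_def])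
    also have "\<dots> = (\<Sum>j\<in>I. if j = i then w $ i else 0)"
      by (rule sum.cong) (use I i w in auto)
    also have "\<dots> = w $ i"
    proof -
      have fI: "finite I" using I finite_subset by blast
      show ?thesis using Z i fI by (cases "i \<in> I") (simp_all add: sum.delta)
    qed
    finally show "w $ i = lincomb ?a ?E $ i" by simp
  next
    show "dim_vec w = dim_vec (lincomb ?a ?E)" using w lincomb_dim[OF fin Ec] by simp
  qed
  then show "w \<in> span ?E" using fin by (intro in_spanI) auto
qed

lemma rank_struct:
  fixes M :: "'a mat" and w :: "'a vec"
  assumes M: "M \<in> carrier_mat n n" and I: "I \<subseteq> {..<n}"
  and E: "unit_vec n ` I \<subseteq> set (cols M)"
  and C: "set (cols M) \<subseteq> insert (0\<^sub>v n) (insert w (unit_vec n ` I))"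
  and w: "w \<in> set (cols M)"
  shows "rank M = card I + (if (\<forall>i<n. i \<notin> I \<longrightarrow> w $ i = 0) then 0 else 1)"
proof -
  let ?E = "unit_vec n ` I :: 'a vec set"
  let ?P = "\<lambda>T. T \<subseteq> set (cols M) \<and> lin_indpt T"
  have colsc: "set (cols M) \<subseteq> carrier_vec n" using M cols_dim by blast
  have wc: "w \<in> carrier_vec n" using w colsc by auto
  have Ec: "?E \<subseteq> carrier_vec n" by auto
  have "?E \<subseteq> set (unit_vecs n)" using I unfolding unit_vecs_def by auto
  then have liE: "lin_indpt ?E" using unit_vecs_basis subset_li_is_li unfolding basis_def by blast
  have inj: "inj_on (unit_vec n :: nat \<Rightarrow> 'a vec) I"
  proof
    fix i j assume "i \<in> I" "j \<in> I" "(unit_vec n i :: 'a vec) = unit_vec n j"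
    then have "(unit_vec n i :: 'a vec) $ i = unit_vec n j $ i" by simp
    moreover have "i < n" "j < n" using \<open>i \<in> I\<close> \<open>j \<in> I\<close> I by auto
    ultimately show "i = j" by (auto split: if_splits)
  qed
  have cardE: "card ?E = card I" using card_image[OF inj] .
  have finI: "finite I" using I finite_subset by blast
  have nz: "carrier (class_ring :: 'a ring) \<noteq> {\<zero>\<^bsub>class_ring\<^esub>}"
    by (simp add: class_ring_simps) (metis UNIV_I singletonD zero_neq_one)
  have no0: "0\<^sub>v n \<notin> T" if "?P T" for T
    using zero_nin_lin_indpt[of T] that colsc nz by auto
  show ?thesis
  proof (cases "\<forall>i<n. i \<notin> I \<longrightarrow> w $ i = 0")
    case True
    then have ws: "w \<in> span ?E" using span_units_char[OF I wc] by simp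
    have "maximal ?E ?P" unfolding maximal_def
    proof (intro conjI allI impI)
      show "?E \<subseteq> set (cols M)" by (rule E)
      show "lin_indpt ?E" by (rule liE)
      fix T assume T: "?E \<subseteq> T \<and> ?P T"
      show "T = ?E"
      proof (rule ccontr)
        assume "T \<noteq> ?E"
        then obtain t where t: "t \<in> T" "t \<notin> ?E" using T by blast
        then have "t = w" using T C no0[of T] by auto
        then have "lin_dep (?E \<union> {w})" using lin_dep_iff_in_span[OF Ec liE wc] ws t by simp
        moreover have "?E \<union> {w} \<subseteq> T" using T t \<open>t = w\<close> by auto
        ultimately show False using supset_ld_is_ld T by blast
      qed
    qed
    then have "rank M = card ?E" using rank_card_indpt[OF M] by blast
    then show ?thesis using True cardE by simp
  next
    case False
    then have ws: "w \<notin> span ?E" using span_units_char[OF I wc] by simp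
    have wE: "w \<notin> ?E" using ws in_own_span[OF Ec] by blast
    have li: "lin_indpt (?E \<union> {w})" using lin_dep_iff_in_span[OF Ec liE wc wE] ws by simp
    have "maximal (?E \<union> {w}) ?P" unfolding maximal_def
    proof (intro conjI allI impI)
      show "?E \<union> {w} \<subseteq> set (cols M)" using E w by auto
      show "lin_indpt (?E \<union> {w})" by (rule li)
      fix T assume T: "?E \<union> {w} \<subseteq> T \<and> ?P T"
      show "T = ?E \<union> {w}"
      proof (rule ccontr)
        assume "T \<noteq> ?E \<union> {w}"
        then obtain t where t: "t \<in> T" "t \<notin> ?E \<union> {w}" using T by blast
        then show False using T C no0[of T] by auto
      qed
    qed
    then have "rank M = card (?E \<union> {w})" using rank_card_indpt[OF M] by blast
    also have "\<dots> = card ?E + 1" using wE finI by simp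
    finally show ?thesis using False cardE by simp
  qed
qed

end

context setting begin

lemma col_B: assumes j: "j < n"
  shows "col B j = (if j = n - 1 then v else if Suc j \<in> S then 0\<^sub>v n else unit_vec n (Suc j))"
proof (rule eq_vecI)
  fix i assume "i < dim_vec (if j = n - 1 then v else if Suc j \<in> S then 0\<^sub>v n else unit_vec n (Suc j))"
  then have i: "i < n" using v by (auto split: if_splits)
  have cB: "col B j $ i = B $$ (i, j)" using i j by simp
  show "col B j $ i = (if j = n - 1 then v else if Suc j \<in> S then 0\<^sub>v n else unit_vec n (Suc j)) $ i"
  proof (cases "j = n - 1")
    case True then show ?thesis using cB B_ent[OF i j] by simp
  next
    case False
    then have sj: "Suc j < n" using j by auto
    show ?thesis
    proof (cases "Suc j \<in> S")
      case True then show ?thesis using cB B_ent[OF i j] False i by auto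
    next
      case F2: False
      have "unit_vec n (Suc j) $ i = (if i = Suc j then 1 else 0)" using i sj by simp
      then show ?thesis using cB B_ent[OF i j] False F2 sj by auto
    qed
  qed
qed (use v j in auto)

lemma rank_B: "vec_space.rank n B = card ({..<n} - S) + (if (\<forall>i\<in>S. v $ i = 0) then 0 else 1)"
proof -
  let ?I = "{..<n} - S"
  have cols: "set (cols B) = col B ` {..<n}"
    by (simp add: cols_def atLeast0LessThan)
  have E: "unit_vec n ` ?I \<subseteq> set (cols B)"
  proof
    fix x :: "'a vec" assume "x \<in> unit_vec n ` ?I"
    then obtain i where i: "i < n" "i \<notin> S" "x = unit_vec n i" by auto
    then have "i \<noteq> 0" using zero_S by metis
    then have "col B (i - 1) = x" using col_B[of "i - 1"] i by auto
    moreover have "i - 1 \<in> {..<n}" using i by auto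
    ultimately show "x \<in> set (cols B)" unfolding cols by (metis image_eqI)
  qed
  have C: "set (cols B) \<subseteq> insert (0\<^sub>v n) (insert v (unit_vec n ` ?I))"
  proof
    fix x :: "'a vec" assume "x \<in> set (cols B)"
    then obtain j where j: "j < n" "x = col B j" unfolding cols by auto
    show "x \<in> insert (0\<^sub>v n) (insert v (unit_vec n ` ?I))"
    proof (cases "j = n - 1")
      case True then show ?thesis using col_B j by simp
    next
      case False
      then have sj: "Suc j < n" using j by auto
      show ?thesis
      proof (cases "Suc j \<in> S")
        case True then show ?thesis using col_B[OF j(1)] j(2) False by simp
      next
        case F2: False
        then have "Suc j \<in> ?I" using sj by simp
        then have "unit_vec n (Suc j) \<in> unit_vec n ` ?I" by (rule imageI)
        moreover have "x = unit_vec n (Suc j)" using col_B[OF j(1)] j(2) False F2 by simp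
        ultimately show ?thesis by blast
      qed
    qed
  qed
  have w: "v \<in> set (cols B)"
  proof -
    have "n - 1 < n" using pn by simp
    then have "col B (n - 1) = v" using col_B[of "n - 1"] by simp
    moreover have "n - 1 \<in> {..<n}" using pn by simp
    ultimately show ?thesis unfolding cols by (metis image_eqI)
  qed
  have I: "?I \<subseteq> {..<n}" by auto
  have eq: "(\<forall>i<n. i \<notin> ?I \<longrightarrow> v $ i = 0) = (\<forall>i\<in>S. v $ i = 0)" using S_sub by auto
  show ?thesis using vec_space.rank_struct[OF B_carr I E C w] eq by simp
qed

end

lemma count_vecs:
  fixes g :: "nat \<Rightarrow> 'a::finite"
  assumes K: "K \<subseteq> {..<n}"
  shows "card {x \<in> carrier_vec n. \<forall>i\<in>K. x $ i = g i} = card (UNIV :: 'a set) ^ (n - card K)"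
proof -
  define D where "D = {..<n} - K"
  define f where "f = (\<lambda>h. vec n (\<lambda>i. if i \<in> K then g i else h i) :: 'a vec)"
  define R where "R = {x \<in> carrier_vec n. \<forall>i\<in>K. x $ i = g i}"
  have inj: "inj_on f (PiE D (\<lambda>_. UNIV))"
  proof (rule inj_onI)
    fix h1 h2 :: "nat \<Rightarrow> 'a" assume h: "h1 \<in> PiE D (\<lambda>_. UNIV)" "h2 \<in> PiE D (\<lambda>_. UNIV)" "f h1 = f h2"
    show "h1 = h2"
    proof (rule ext)
      fix i show "h1 i = h2 i"
      proof (cases "i \<in> D")
        case True
        have "f h1 $ i = f h2 $ i" using h(3) by simp
        moreover have "i < n" "i \<notin> K" using True by (auto simp: D_def)
        ultimately show ?thesis by (simp add: f_def)
      next
        case False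
        then have "h1 i = undefined" "h2 i = undefined" using h(1,2) PiE_arb by metis+
        then show ?thesis by simp
      qed
    qed
  qed
  have img: "f ` PiE D (\<lambda>_. UNIV) = R"
  proof
    show "f ` PiE D (\<lambda>_. UNIV) \<subseteq> R"
    proof (rule image_subsetI)
      fix h :: "nat \<Rightarrow> 'a"
      have "f h \<in> carrier_vec n" by (simp add: f_def)
      moreover have "\<forall>i\<in>K. f h $ i = g i"
      proof
        fix i assume "i \<in> K"
        then have "i < n" using K by blast
        then show "f h $ i = g i" using \<open>i \<in> K\<close> by (simp add: f_def)
      qed
      ultimately show "f h \<in> R" by (simp add: R_def)
    qed
    show "R \<subseteq> f ` PiE D (\<lambda>_. UNIV)"
    proof
      fix x :: "'a vec" assume "x \<in> R"
      then have xc: "x \<in> carrier_vec n" and xK: "\<And>i. i \<in> K \<Longrightarrow> x $ i = g i" by (auto simp: R_def)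
      define h where "h = (\<lambda>i. if i \<in> D then x $ i else undefined)"
      have hin: "h \<in> PiE D (\<lambda>_. UNIV)" by (rule PiE_I) (simp_all add: h_def)
      have fx: "f h = x"
      proof (rule eq_vecI)
        fix i assume "i < dim_vec x"
        then have i: "i < n" using carrier_vecD[OF xc] by simp
        show "f h $ i = x $ i"
        proof (cases "i \<in> K")
          case True then show ?thesis using xK i by (simp add: f_def)
        next
          case False
          have "i \<in> D" using i False by (simp add: D_def)
          then have "h i = x $ i" by (simp add: h_def)
          moreover have "f h $ i = h i" using i False by (simp add: f_def)
          ultimately show ?thesis by simp
        qed
      next
        show "dim_vec (f h) = dim_vec x" using carrier_vecD[OF xc] by (simp add: f_def)
      qed
      show "x \<in> f ` PiE D (\<lambda>_. UNIV)" using image_eqI[of x f h, OF fx[symmetric] hin] .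
    qed
  qed
  have "card R = card (PiE D (\<lambda>_. UNIV :: 'a set))"
    unfolding img[symmetric] by (rule card_image[OF inj])
  also have "\<dots> = card (UNIV :: 'a set) ^ card D" by (simp add: card_PiE D_def)
  also have "card D = n - card K"
  proof -
    have "finite K" using K finite_subset by blast
    then show ?thesis using K card_Diff_subset[of K "{..<n}"] by (simp add: D_def)
  qed
  finally show ?thesis by (simp add: R_def)
qed

lemma card_filter_image:
  assumes "inj_on f C"
  shows "card {b \<in> f ` C. P b} = card {c \<in> C. P (f c)}"
proof -
  have "{b \<in> f ` C. P b} = f ` {c \<in> C. P (f c)}" by auto
  moreover have "inj_on f {c \<in> C. P (f c)}" using assms by (rule inj_on_subset) auto
  ultimately show ?thesis by (simp add: card_image)
qed

lemma Collect_carrier_cong: "(\<And>v. v \<in> C \<Longrightarrow> P v = Q v) \<Longrightarrow> {v \<in> C. P v} = {v \<in> C. Q v}"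
  by auto

theorem lemma3p1:
  fixes rs :: "nat list" and n :: nat
  assumes "rs \<noteq> []" and "\<forall>r\<in>set rs. r > 0" and "n = sum_list rs"
  defines "A \<equiv> (jordan_nilp_diag rs :: 'a::{finite,field} mat)"
  defines "M \<equiv> (\<lambda>v. replace_last_col A v) ` carrier_vec n"
  defines "q \<equiv> card (UNIV :: 'a set)"
  shows "(card {B\<in>M. nilpotent_mat B} = card {B\<in>M. semi_idempotent n B \<and> \<not> nilpotent_mat B}
       \<and> card {B\<in>M. nilpotent_mat B} = q ^ (n - last rs))
     \<and> (last rs > 1 \<longrightarrow>
       card {B\<in>M. nilpotent_mat B \<and> vec_space.rank n B = vec_space.rank n A}
         = card {B\<in>M. semi_idempotent n B \<and> \<not> nilpotent_mat B \<and> vec_space.rank n B = vec_space.rank n A}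
       \<and> card {B\<in>M. nilpotent_mat B \<and> vec_space.rank n B = vec_space.rank n A}
         = q ^ (n - last rs - (length rs - 1)))"
proof -
  note ne = assms(1) and pos = assms(2) and nsum = assms(3)
  define S where "S = starts rs"
  define p where "p = n - last rs"
  have Ac: "A \<in> carrier_mat n n" unfolding A_def nsum by (rule jnd_carrier)
  have Aent: "\<And>i j. i < n \<Longrightarrow> j < n \<Longrightarrow> A $$ (i,j) = (if i = Suc j \<and> i \<notin> S then 1 else 0)"
    unfolding A_def S_def nsum using jnd_entry[OF pos] by blast
  have Ssub: "S \<subseteq> {..<n}" unfolding S_def nsum using starts_bound[OF pos] by blast
  have S0: "0 \<in> S" unfolding S_def using zero_in_starts[OF ne] .
  have pS: "p \<in> S" unfolding S_def p_def nsum using last_in_starts[OF ne] .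
  have Sp: "\<And>i. i \<in> S \<Longrightarrow> i \<le> p" unfolding S_def p_def nsum using starts_le_last[OF ne] by blast
  have finS: "finite S" using Ssub finite_subset by blast
  have cardS: "card S = length rs" unfolding S_def using card_starts[OF pos] .
  have lastle: "last rs \<le> n" unfolding nsum using ne by (intro member_le_sum_list last_in_set) auto
  have lastpos: "last rs > 0" using pos ne by simp
  have pn: "p < n" using pS Ssub by auto
  have loc: "setting n p S A v" if "v \<in> carrier_vec n" for v :: "'a vec"
    by (unfold_locales) (use Ac Aent Ssub S0 pS Sp that in auto)
  define Bf where "Bf = (\<lambda>v. replace_last_col A v)"
  have MB: "M = Bf ` carrier_vec n" unfolding M_def Bf_def ..
  have inj: "inj_on Bf (carrier_vec n)"
  proof (rule inj_onI)
    fix v w :: "'a vec" assume v: "v \<in> carrier_vec n" and w: "w \<in> carrier_vec n" and eq: "Bf v = Bf w"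
    show "v = w"
    proof (rule eq_vecI)
      fix i assume "i < dim_vec w"
      then have i: "i < n" using w by simp
      have "Bf v $$ (i, n - 1) = Bf w $$ (i, n - 1)" using eq by simp
      then show "v $ i = w $ i" using i pn Ac by (simp add: Bf_def replace_last_col_def)
    qed (use v w in simp)
  qed
  have Bf_eq: "Bf v = setting.B A v" if "v \<in> carrier_vec n" for v
    by (simp add: Bf_def setting.B_def[OF loc[OF that]])
  have nil: "nilpotent_mat (Bf v) \<longleftrightarrow> (\<forall>i\<in>{p..<n}. v $ i = 0)" if "v \<in> carrier_vec n" for v
    using setting.nil_iff[OF loc[OF that]] unfolding Bf_eq[OF that] setting.W0_def[OF loc[OF that]] by auto
  have si: "(semi_idempotent n (Bf v) \<and> \<not> nilpotent_mat (Bf v)) \<longleftrightarrow>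
      (\<forall>i\<in>{p..<n}. v $ i = (if i = n - 1 then 1 else 0))" if "v \<in> carrier_vec n" for v
    using setting.si_iff[OF loc[OF that]] unfolding Bf_eq[OF that] setting.W1_def[OF loc[OF that]] by auto
  have z: "(0\<^sub>v n :: 'a vec) \<in> carrier_vec n" by simp
  have BfA: "Bf (0\<^sub>v n) = A"
  proof (rule eq_matI)
    fix i j assume "i < dim_row A" "j < dim_col A"
    then have ij: "i < n" "j < n" using Ac by auto
    have "Bf (0\<^sub>v n) $$ (i,j) = (if j = n - 1 then 0 else A $$ (i,j))"
      using ij Ac by (simp add: Bf_def replace_last_col_def)
    moreover have "j = n - 1 \<Longrightarrow> A $$ (i,j) = 0" using Aent[OF ij] ij by auto
    ultimately show "Bf (0\<^sub>v n) $$ (i, j) = A $$ (i, j)" by auto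
  qed (use Ac in \<open>auto simp: Bf_def replace_last_col_def\<close>)
  have rankA: "vec_space.rank n A = card ({..<n} - S)"
  proof -
    have "\<forall>i\<in>S. (0\<^sub>v n :: 'a vec) $ i = 0" using Ssub by auto
    then show ?thesis using setting.rank_B[OF loc[OF z]] BfA unfolding Bf_eq[OF z] by simp
  qed
  have rk: "vec_space.rank n (Bf v) = vec_space.rank n A \<longleftrightarrow> (\<forall>i\<in>S. v $ i = 0)" if "v \<in> carrier_vec n" for v
    using setting.rank_B[OF loc[OF that]] rankA unfolding Bf_eq[OF that] by simp
  have Kp: "{p..<n} \<subseteq> {..<n}" by auto
  have cardKp: "card {p..<n} = last rs" using lastle by (simp add: p_def)
  have c1: "card {B\<in>M. nilpotent_mat B} = q ^ (n - last rs)"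
  proof -
    have "card {B\<in>M. nilpotent_mat B} = card {v\<in>carrier_vec n. nilpotent_mat (Bf v)}"
      unfolding MB by (rule card_filter_image[OF inj])
    also have "{v\<in>carrier_vec n. nilpotent_mat (Bf v)} = {v\<in>carrier_vec n. \<forall>i\<in>{p..<n}. v $ i = (\<lambda>_. 0) i}"
      by (rule Collect_carrier_cong) (rule nil)
    also have "card \<dots> = q ^ (n - last rs)" by (subst count_vecs[OF Kp]) (simp add: cardKp q_def p_def)
    finally show ?thesis .
  qed
  have c2: "card {B\<in>M. semi_idempotent n B \<and> \<not> nilpotent_mat B} = q ^ (n - last rs)"
  proof -
    have "card {B\<in>M. semi_idempotent n B \<and> \<not> nilpotent_mat B}
        = card {v\<in>carrier_vec n. semi_idempotent n (Bf v) \<and> \<not> nilpotent_mat (Bf v)}"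
      unfolding MB by (rule card_filter_image[OF inj])
    also have "{v\<in>carrier_vec n. semi_idempotent n (Bf v) \<and> \<not> nilpotent_mat (Bf v)}
        = {v\<in>carrier_vec n. \<forall>i\<in>{p..<n}. v $ i = (\<lambda>i. if i = n - 1 then 1 else 0) i}"
      by (rule Collect_carrier_cong) (rule si)
    also have "card \<dots> = q ^ (n - last rs)" by (subst count_vecs[OF Kp]) (simp add: cardKp q_def p_def)
    finally show ?thesis .
  qed
  have part2: "card {B\<in>M. nilpotent_mat B \<and> vec_space.rank n B = vec_space.rank n A}
         = card {B\<in>M. semi_idempotent n B \<and> \<not> nilpotent_mat B \<and> vec_space.rank n B = vec_space.rank n A}
       \<and> card {B\<in>M. nilpotent_mat B \<and> vec_space.rank n B = vec_space.rank n A}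
         = q ^ (n - last rs - (length rs - 1))" if l1: "last rs > 1"
  proof -
    define K where "K = {p..<n} \<union> S"
    have K: "K \<subseteq> {..<n}" using Ssub by (auto simp: K_def)
    have KS: "K = {p..<n} \<union> (S - {p})" using pS pn by (auto simp: K_def)
    have disj: "{p..<n} \<inter> (S - {p}) = {}" using Sp by fastforce
    have "card K = card {p..<n} + card (S - {p})"
      unfolding KS using disj finS by (simp add: card_Un_disjoint)
    also have "card (S - {p}) = length rs - 1" using cardS pS finS by simp
    finally have cardK: "card K = last rs + (length rs - 1)" using cardKp by simp
    have n1S: "n - 1 \<notin> S"
    proof
      assume "n - 1 \<in> S"
      then have "n - 1 \<le> n - last rs" using Sp by (simp add: p_def)
      then show False using l1 lastle by arith
    qed
    have "card {B\<in>M. nilpotent_mat B \<and> vec_space.rank n B = vec_space.rank n A}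
        = card {v\<in>carrier_vec n. nilpotent_mat (Bf v) \<and> vec_space.rank n (Bf v) = vec_space.rank n A}"
      unfolding MB by (rule card_filter_image[OF inj])
    also have "{v\<in>carrier_vec n. nilpotent_mat (Bf v) \<and> vec_space.rank n (Bf v) = vec_space.rank n A}
        = {v\<in>carrier_vec n. \<forall>i\<in>K. v $ i = (\<lambda>_. 0) i}"
      by (rule Collect_carrier_cong) (use nil rk in \<open>auto simp: K_def\<close>)
    also have "card \<dots> = q ^ (n - last rs - (length rs - 1))" by (subst count_vecs[OF K]) (simp add: cardK q_def)
    finally have e1: "card {B\<in>M. nilpotent_mat B \<and> vec_space.rank n B = vec_space.rank n A}
         = q ^ (n - last rs - (length rs - 1))" .
    have "card {B\<in>M. semi_idempotent n B \<and> \<not> nilpotent_mat B \<and> vec_space.rank n B = vec_space.rank n A}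
        = card {v\<in>carrier_vec n. semi_idempotent n (Bf v) \<and> \<not> nilpotent_mat (Bf v) \<and> vec_space.rank n (Bf v) = vec_space.rank n A}"
      unfolding MB by (rule card_filter_image[OF inj])
    also have "{v\<in>carrier_vec n. semi_idempotent n (Bf v) \<and> \<not> nilpotent_mat (Bf v) \<and> vec_space.rank n (Bf v) = vec_space.rank n A}
        = {v\<in>carrier_vec n. \<forall>i\<in>K. v $ i = (\<lambda>i. if i = n - 1 then 1 else 0) i}"
    proof (intro Collect_cong conj_cong refl)
      fix v :: "'a vec" assume v: "v \<in> carrier_vec n"
      have "(semi_idempotent n (Bf v) \<and> \<not> nilpotent_mat (Bf v) \<and> vec_space.rank n (Bf v) = vec_space.rank n A)
          \<longleftrightarrow> (\<forall>i\<in>{p..<n}. v $ i = (if i = n - 1 then 1 else 0)) \<and> (\<forall>i\<in>S. v $ i = 0)"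
        using si[OF v] rk[OF v] by blast
      also have "\<dots> \<longleftrightarrow> (\<forall>i\<in>K. v $ i = (if i = n - 1 then 1 else 0))"
        using n1S by (auto simp: K_def)
      finally show "(semi_idempotent n (Bf v) \<and> \<not> nilpotent_mat (Bf v) \<and> vec_space.rank n (Bf v) = vec_space.rank n A)
          = (\<forall>i\<in>K. v $ i = (\<lambda>i. if i = n - 1 then 1 else 0) i)" by simp
    qed
    also have "card \<dots> = q ^ (n - last rs - (length rs - 1))" by (subst count_vecs[OF K]) (simp add: cardK q_def)
    finally show ?thesis using e1 by simp
  qed
  have c12: "card {B\<in>M. nilpotent_mat B} = card {B\<in>M. semi_idempotent n B \<and> \<not> nilpotent_mat B}"
    using c1 c2 by simp
  show ?thesis using c12 c1 part2 by blast
qed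


end
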